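(* Let $b^*>0$, let $f$ be a real function that is three times differentiable on an open interval containing $[0,b^*]$, with $f'''$ Lebesgue integrable on $[0,b^*]$. Let $a,b\in[0,b^*]$ with $a<b$, let $\alpha\in[0,1]$, $m\in(0,1]$, and $q\ge 1$. If $|f'''|^q$ is $(\alpha,m)$-convex on $[0,b^*]$, then $$\left|\int_a^{mb}f(x)\,dx-\frac{mb-a}{6}\left[f(a)+4f\left(\frac{a+mb}{2}\right)+f(mb)\right]\right|\le\frac{(mb-a)^4}{1152}\left\{\left(\frac{12|f'''(a)|^q+m\,[2^\alpha(3+\alpha)(4+\alpha)-12]\,|f'''(b)|^q}{2^\alpha(3+\alpha)(4+\alpha)}\right)^{1/q}+\Bigl(C_\alpha|f'''(a)|^q+m\,(1-C_\alpha)\,|f'''(b)|^q\Bigr)^{1/q}\right\},$$ where $$C_\alpha=\frac{12\left[\alpha^2+11\alpha+34-2^{4+\alpha}(2-\alpha)\right]}{2^\alpha(1+\alpha)(2+\alpha)(3+\alpha)(4+\alpha)}.$$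
   Context: For $(\alpha,m)\in[0,1]^2$ and $b^*>0$, a function $g:[0,b^*]\to\mathbb{R}$ is called $(\alpha,m)$-convex on $[0,b^*]$ if for all $x,y\in[0,b^*]$ and $t\in[0,1]$, $$g(tx+m(1-t)y)\le t^\alpha g(x)+m(1-t^\alpha)g(y).$$ *)

theory Defs
  imports "HOL-Analysis.Analysis"
begin

text \<open>(alpha,m)-convexity of g on [0,bs]; t^alpha uses the convention 0^0 = 1 (Isabelle's powr has 0 powr 0 = 0).\<close>
definition alpha_m_convex_on :: "real \<Rightarrow> real \<Rightarrow> real \<Rightarrow> (real \<Rightarrow> real) \<Rightarrow> bool" where
  "alpha_m_convex_on \<alpha> m bs g \<longleftrightarrow>
     (\<forall>x\<in>{0..bs}. \<forall>y\<in>{0..bs}. \<forall>t\<in>{0..1::real}.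
        g (t * x + m * (1 - t) * y) \<le> (if t = 0 \<and> \<alpha> = 0 then 1 else t powr \<alpha>) * g x
              + m * (1 - (if t = 0 \<and> \<alpha> = 0 then 1 else t powr \<alpha>)) * g y)"

end

theory Submission
  imports Defs
begin

lemma dprod:
  fixes p g :: "real \<Rightarrow> real"
  assumes "(p has_real_derivative p') (at s)" "(g has_real_derivative g') (at s)"
  shows "((\<lambda>s. p s * c * g s) has_real_derivative (p' * c * g s + p s * c * g')) (at s)"
  using DERIV_mult[OF DERIV_cmult[OF assms(1), of c] assms(2)]
  by (simp add: algebra_simps)

lemma dprod0:
  fixes p g :: "real \<Rightarrow> real"
  assumes "(p has_real_derivative p') (at s)" "(g has_real_derivative g') (at s)"
  shows "((\<lambda>s. p s * g s) has_real_derivative (p' * g s + p s * g')) (at s)"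
  using DERIV_mult[OF assms(1) assms(2)]
  by (simp add: algebra_simps)

lemma tangent_powr:
  fixes x mu p :: real
  assumes "x \<ge> 0" "mu > 0" "0 < p" "p \<le> 1"
  shows "x powr p \<le> (1-p)*mu powr p + p*mu powr (p-1)*x"
proof (cases "x = 0")
  case True thus ?thesis using assms by simp
next
  case False
  hence x: "x > 0" using assms by simp
  have Y: "x powr p * mu powr (1-p) \<le> p*x + (1-p)*mu"
    using Youngs_inequality_0[of p "1-p" x mu] assms x by simp
  have e1: "mu powr (1-p) * mu powr (p-1) = 1"
    using assms by (simp add: powr_add[symmetric])
  have e2: "mu * mu powr (p-1) = mu powr p"
    using assms by (simp add: powr_add[symmetric] powr_mult_base)
  have "x powr p = x powr p * mu powr (1-p) * mu powr (p-1)" using e1 by (simp add: mult.assoc)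
  also have "\<dots> \<le> (p*x + (1-p)*mu) * mu powr (p-1)"
    using Y by (intro mult_right_mono) auto
  also have "\<dots> = (1-p)*mu powr p + p*mu powr (p-1)*x"
    using e2 by (simp add: algebra_simps)
  finally show ?thesis .
qed

lemma half_bound:
  fixes k F T :: "real \<Rightarrow> real" and lo hi W P A B m q I :: real
  assumes hI: "((\<lambda>s. k s * F s) has_integral I) {lo..hi}"
    and hk: "(k has_integral W) {lo..hi}"
    and hkT: "((\<lambda>s. k s * T s) has_integral (W*P)) {lo..hi}"
    and W: "W > 0" and q: "q \<ge> 1"
    and kpos: "\<forall>s\<in>{lo..hi}. k s \<ge> 0"
    and Gpos: "\<forall>s\<in>{lo..hi}. 0 \<le> T s * A + m*(1 - T s)*B"
    and Fb: "\<forall>s\<in>{lo..hi}. k s = 0 \<or> \<bar>F s\<bar> powr q \<le> T s * A + m*(1 - T s)*B"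
  shows "\<bar>I\<bar> \<le> W * (P*A + m*(1-P)*B) powr (1/q)"
proof -
  define R where "R = P*A + m*(1-P)*B"
  define G where "G s = T s * A + m*(1 - T s)*B" for s
  define p where "p = 1/q"
  have p: "0 < p" "p \<le> 1" using q by (auto simp: p_def)
  have hG: "((\<lambda>s. k s * G s) has_integral (W*R)) {lo..hi}"
  proof -
    have "((\<lambda>s. A*(k s * T s) + (m*B)*k s - (m*B)*(k s * T s)) has_integral
           (A*(W*P) + (m*B)*W - (m*B)*(W*P))) {lo..hi}"
      by (intro has_integral_diff has_integral_add has_integral_mult_right hk hkT)
    moreover have "(\<lambda>s. A*(k s * T s) + (m*B)*k s - (m*B)*(k s * T s)) = (\<lambda>s. k s * G s)"
      by (auto simp: G_def algebra_simps)
    moreover have "A*(W*P) + (m*B)*W - (m*B)*(W*P) = W*R" by (simp add: R_def algebra_simps)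
    ultimately show ?thesis by simp
  qed
  have "0 \<le> W*R"
    using has_integral_nonneg[OF hG] kpos Gpos by (auto simp: G_def)
  hence R: "R \<ge> 0" using W by (simp add: zero_le_mult_iff)
  have main: "\<bar>I\<bar> \<le> W*((1-p)*mu powr p + p*mu powr (p-1)*R)" if mu: "mu > 0" for mu
  proof -
    define c1 where "c1 = (1-p)*mu powr p"
    define c2 where "c2 = p*mu powr (p-1)"
    have c2: "c2 \<ge> 0" using p by (simp add: c2_def)
    have hB: "((\<lambda>s. c1 * k s + c2 * (k s * G s)) has_integral (c1*W + c2*(W*R))) {lo..hi}"
      by (intro has_integral_add has_integral_mult_right hk hG)
    have pw: "\<bar>k s * F s\<bar> \<le> c1 * k s + c2 * (k s * G s)" if s: "s \<in> {lo..hi}" for s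
    proof (cases "k s = 0")
      case True thus ?thesis by simp
    next
      case False
      hence FG: "\<bar>F s\<bar> powr q \<le> G s" using Fb s by (auto simp: G_def)
      have "\<bar>F s\<bar> = (\<bar>F s\<bar> powr q) powr p"
        using q by (simp add: powr_powr p_def)
      also have "\<dots> \<le> c1 + c2 * (\<bar>F s\<bar> powr q)"
        using tangent_powr[of "\<bar>F s\<bar> powr q" mu p] mu p by (simp add: c1_def c2_def)
      also have "\<dots> \<le> c1 + c2 * G s" using FG c2 by (simp add: mult_left_mono)
      finally have "\<bar>F s\<bar> \<le> c1 + c2 * G s" .
      hence "k s * \<bar>F s\<bar> \<le> k s * (c1 + c2 * G s)"
        using kpos s by (intro mult_left_mono) auto
      thus ?thesis using kpos s by (simp add: abs_mult algebra_simps)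
    qed
    have "I \<le> c1*W + c2*(W*R)"
      by (rule has_integral_le[OF hI hB]) (use pw in \<open>auto simp: abs_le_iff\<close>)
    moreover have "-I \<le> c1*W + c2*(W*R)"
      by (rule has_integral_le[OF has_integral_neg[OF hI] hB]) (use pw in \<open>auto simp: abs_le_iff\<close>)
    ultimately show ?thesis by (simp add: c1_def c2_def algebra_simps)
  qed
  show ?thesis
  proof (cases "R > 0")
    case True
    have "R powr (p-1) * R = R powr p"
      using True by (simp add: powr_add[symmetric] powr_mult_base mult.commute)
    hence "(1-p)*R powr p + p*R powr (p-1)*R = R powr p" by (simp add: algebra_simps)
    thus ?thesis using main[OF True] by (simp add: R_def p_def)
  next
    case False
    hence R0: "R = 0" using R by simp
    show ?thesis
    proof (rule ccontr)
      assume "\<not> ?thesis"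
      hence Ipos: "\<bar>I\<bar> > 0" using R0 by (simp add: R_def)
      define mu where "mu = (\<bar>I\<bar>/W) powr q"
      have mu: "mu > 0" using Ipos W by (simp add: mu_def)
      have "mu powr p = \<bar>I\<bar>/W" using q Ipos W by (simp add: mu_def powr_powr p_def)
      hence "\<bar>I\<bar> \<le> (1-p)*\<bar>I\<bar>" using main[OF mu] R0 W by simp
      thus False using Ipos p by (smt (verit) mult_less_cancel_right2)
    qed
  qed
qed


lemma d_upow:
  fixes r s :: real assumes "s < 1"
  shows "((\<lambda>s. (1-s) powr r) has_real_derivative (-(r*(1-s) powr (r-1)))) (at s)"
proof -
  have "((\<lambda>s. (1-s) powr r) has_real_derivative (r*(1-s) powr (r-1)) * (-1)) (at s)"
    by (rule DERIV_chain2[OF has_real_derivative_powr]) (use assms in \<open>auto intro!: derivative_eq_intros\<close>)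
  thus ?thesis by simp
qed

lemma upow_split:
  fixes u a :: real assumes "u > 0"
  shows "u powr (a + real n) = u^n * u powr a"
  using assms by (simp add: powr_add powr_realpow)

lemma int_K1: "((\<lambda>s. (s^2 - 2* s^3)/12 :: real) has_integral (1/1152)) {0..1/2}"
proof -
  have "((\<lambda>s. (s^2 - 2* s^3)/12 :: real) has_integral ((\<lambda>s. (s^3/3 - s^4/2)/12) (1/2) - (\<lambda>s. (s^3/3 - s^4/2)/12) 0)) {0..1/2}"
    by (rule fundamental_theorem_of_calculus)
       (auto intro!: derivative_eq_intros simp: has_real_derivative_iff_has_vector_derivative[symmetric] power2_eq_square power3_eq_cube)
  thus ?thesis by (simp add: power_divide)
qed

lemma int_K2: "((\<lambda>s. (2 * s^3 - 5 * s^2 + 4 * s - 1)/12 :: real) has_integral (1/1152)) {1/2..1}"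
proof -
  have "((\<lambda>s. (2 * s^3 - 5 * s^2 + 4 * s - 1)/12 :: real) has_integral ((\<lambda>s. (s^4/2 - 5 * s^3/3 + 2 * s^2 - s)/12) 1 - (\<lambda>s. (s^4/2 - 5 * s^3/3 + 2 * s^2 - s)/12) (1/2))) {1/2..1}"
    by (rule fundamental_theorem_of_calculus)
       (auto intro!: derivative_eq_intros simp: has_real_derivative_iff_has_vector_derivative[symmetric] power2_eq_square power3_eq_cube)
  thus ?thesis by (simp add: power_divide)
qed

lemma const1:
  fixes a X :: real assumes a: "a \<ge> 0" and X: "X > 0"
  shows "-(1/12)*(2*((1/2)^4/X)/(a+4) - 5*((1/2)^3/X)/(a+3) + 4*((1/2)^2/X)/(a+2) - ((1/2)^1/X)/(a+1))
     - -(1/12)*(2/(a+4) - 5/(a+3) + 4/(a+2) - 1/(a+1))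
   = 1/1152 * (12*(a^2+11*a+34 - 16*X*(2-a)) / (X*(1+a)*(2+a)*(3+a)*(4+a)))"
proof -
  obtain b1 b2 b3 b4 where b: "b1 = a+1" "b2 = a+2" "b3 = a+3" "b4=a+4" by blast
  have bp: "b1 > 0" "b2 > 0" "b3 > 0" "b4 > 0" using a b by auto
  have e: "a+1 = b1" "a+2=b2" "a+3=b3" "a+4=b4" "1+a = b1" "2+a=b2" "3+a=b3" "4+a=b4" using b by auto
  have "-(1/12)*(2*((1/2)^4/X)/b4 - 5*((1/2)^3/X)/b3 + 4*((1/2)^2/X)/b2 - ((1/2)^1/X)/b1)
     - -(1/12)*(2/b4 - 5/b3 + 4/b2 - 1/b1)
   = 1/1152 * (12*(a^2+11*a+34 - 16*X*(2-a)) / (X*b1*b2*b3*b4))"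
    using bp X apply (simp add: field_simps)
    unfolding b by algebra
  thus ?thesis unfolding e .
qed

lemma int_K1a:
  fixes al :: real assumes al: "0 \<le> al"
  shows "((\<lambda>s. (s^2 - 2 * s^3)/12 * (1-s) powr al) has_integral
     (1/1152 * (12 * (al^2 + 11 * al + 34 - 2 powr (4 + al) * (2 - al)) /
                 (2 powr al * (1 + al) * (2 + al) * (3 + al) * (4 + al))))) {0..1/2}"
proof -
  define P where "P s = -(1/12)*(2*(1-s) powr (al+4)/(al+4) - 5*(1-s) powr (al+3)/(al+3)
      + 4*(1-s) powr (al+2)/(al+2) - (1-s) powr (al+1)/(al+1))" for s :: real
  have "((\<lambda>s. (s^2 - 2 * s^3)/12 * (1-s) powr al) has_integral (P (1/2) - P 0)) {0..1/2}"
  proof (rule fundamental_theorem_of_calculus_interior)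
    show "continuous_on {0..1/2} P" unfolding P_def
      by (intro continuous_intros continuous_on_powr') (use al in auto)
    fix s :: real assume s: "s \<in> {0<..<1/2}"
    hence u: "1 - s > 0" by auto
    have D: "(P has_real_derivative
       (-(1/12)*(2*(-((al+4)*(1-s) powr (al+4-1)))/(al+4) - 5*(-((al+3)*(1-s) powr (al+3-1)))/(al+3)
      + 4*(-((al+2)*(1-s) powr (al+2-1)))/(al+2) - (-((al+1)*(1-s) powr (al+1-1)))/(al+1)))) (at s)"
      unfolding P_def using u
      by (intro DERIV_cmult DERIV_add DERIV_diff DERIV_cdivide d_upow) auto
    have e: "-(1/12)*(2*(-((al+4)*(1-s) powr (al+4-1)))/(al+4) - 5*(-((al+3)*(1-s) powr (al+3-1)))/(al+3)
      + 4*(-((al+2)*(1-s) powr (al+2-1)))/(al+2) - (-((al+1)*(1-s) powr (al+1-1)))/(al+1))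
      = (s^2 - 2 * s^3)/12 * (1-s) powr al"
    proof -
      have a3: "al+4-1 = al + real 3" "al+3-1 = al + real 2" "al+2-1 = al + real 1" "al+1-1 = al" by auto
      have nz: "al+4 \<noteq> 0" "al+3 \<noteq> 0" "al+2 \<noteq> 0" "al+1 \<noteq> 0" using al by auto
      show ?thesis using al unfolding a3 upow_split[OF u]
        apply (simp add: nz)
        apply (simp add: algebra_simps power2_eq_square power3_eq_cube)
        apply (simp add: field_simps)
        done
    qed
    show "(P has_vector_derivative (s^2 - 2 * s^3)/12 * (1-s) powr al) (at s)"
      using D unfolding e has_real_derivative_iff_has_vector_derivative .
  qed simp
  moreover have "P (1/2) - P 0 = (1/1152 * (12 * (al^2 + 11 * al + 34 - 2 powr (4 + al) * (2 - al)) /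
                 (2 powr al * (1 + al) * (2 + al) * (3 + al) * (4 + al))))"
  proof -
    have h: "(1/2::real) powr (al + real n) = (1/2)^n / 2 powr al" for n
      by (simp add: upow_split powr_divide power_one_over)
    have h16: "(2::real) powr (4 + al) = 16 * 2 powr al" by (simp add: powr_add)
    have X: "(2::real) powr al > 0" by simp
    have n: "(4::real) = real 4" "(3::real) = real 3" "(2::real) = real 2" "(1::real) = real 1" by auto
    have P0: "P 0 = -(1/12)*(2/(al+4) - 5/(al+3) + 4/(al+2) - 1/(al+1))" by (simp add: P_def)
    have P12: "P (1/2) = -(1/12)*(2*((1/2)^4 / 2 powr al)/(al+4) - 5*((1/2)^3 / 2 powr al)/(al+3)
      + 4*((1/2)^2 / 2 powr al)/(al+2) - ((1/2)^1/ 2 powr al)/(al+1))"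
      unfolding P_def using h[of 4] h[of 3] h[of 2] h[of 1] by (simp add: add.commute)
    show ?thesis unfolding P0 P12 h16 using const1[OF al X] by simp
  qed
  ultimately show ?thesis by simp
qed

lemma const2:
  fixes a X :: real assumes a: "a \<ge> 0" and X: "X > 0"
  shows "0 - -(1/12)*(((1/2)^3/X)/(a+3) - 2*((1/2)^4/X)/(a+4)) = 1/1152 * (12 / (X * (3+a) * (4+a)))"
proof -
  obtain b3 b4 where b: "b3 = a+3" "b4=a+4" by blast
  have bp: "b3 > 0" "b4 > 0" using a b by auto
  have e: "a+3=b3" "a+4=b4" "3+a=b3" "4+a=b4" using b by auto
  have "0 - -(1/12)*(((1/2)^3/X)/b3 - 2*((1/2)^4/X)/b4) = 1/1152 * (12 / (X * b3 * b4))"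
    using bp X apply (simp add: field_simps)
    unfolding b by algebra
  thus ?thesis unfolding e .
qed

lemma int_K2a:
  fixes al :: real assumes al: "0 \<le> al"
  shows "((\<lambda>s. (2 * s^3 - 5 * s^2 + 4 * s - 1)/12 * (1-s) powr al) has_integral
     (1/1152 * (12 / (2 powr al * (3 + al) * (4 + al))))) {1/2..1}"
proof -
  define P where "P s = -(1/12)*((1-s) powr (al+3)/(al+3) - 2*(1-s) powr (al+4)/(al+4))" for s :: real
  have "((\<lambda>s. (2 * s^3 - 5 * s^2 + 4 * s - 1)/12 * (1-s) powr al) has_integral (P 1 - P (1/2))) {1/2..1}"
  proof (rule fundamental_theorem_of_calculus_interior)
    show "continuous_on {1/2..1} P" unfolding P_def
      by (intro continuous_intros continuous_on_powr') (use al in auto)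
    fix s :: real assume s: "s \<in> {1/2<..<1}"
    hence u: "1 - s > 0" by auto
    have D: "(P has_real_derivative
       (-(1/12)*((-((al+3)*(1-s) powr (al+3-1)))/(al+3) - 2*(-((al+4)*(1-s) powr (al+4-1)))/(al+4)))) (at s)"
      unfolding P_def using u
      by (intro DERIV_cmult DERIV_add DERIV_diff DERIV_cdivide d_upow) auto
    have e: "-(1/12)*((-((al+3)*(1-s) powr (al+3-1)))/(al+3) - 2*(-((al+4)*(1-s) powr (al+4-1)))/(al+4))
      = (2 * s^3 - 5 * s^2 + 4 * s - 1)/12 * (1-s) powr al"
    proof -
      have a3: "al+4-1 = al + real 3" "al+3-1 = al + real 2" by auto
      have nz: "al+4 \<noteq> 0" "al+3 \<noteq> 0" using al by auto
      show ?thesis using al unfolding a3 upow_split[OF u]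
        apply (simp add: nz)
        apply (simp add: algebra_simps power2_eq_square power3_eq_cube)
        apply (simp add: field_simps)
        done
    qed
    show "(P has_vector_derivative (2 * s^3 - 5 * s^2 + 4 * s - 1)/12 * (1-s) powr al) (at s)"
      using D unfolding e has_real_derivative_iff_has_vector_derivative .
  qed simp
  moreover have "P 1 - P (1/2) = 1/1152 * (12 / (2 powr al * (3 + al) * (4 + al)))"
  proof -
    have h: "(1/2::real) powr (al + real n) = (1/2)^n / 2 powr al" for n
      by (simp add: upow_split powr_divide power_one_over)
    have X: "(2::real) powr al > 0" by simp
    have P1: "P 1 = 0" using al by (simp add: P_def)
    have P12: "P (1/2) = -(1/12)*(((1/2)^3 / 2 powr al)/(al+3) - 2*((1/2)^4 / 2 powr al)/(al+4))"
      unfolding P_def using h[of 4] h[of 3] by (simp add: add.commute)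
    show ?thesis unfolding P1 P12 using const2[OF al X] by simp
  qed
  ultimately show ?thesis by simp
qed


theorem theorem5:
  fixes f f1 f2 f3 :: "real \<Rightarrow> real" and bs c d a b \<alpha> m q :: real
  assumes bs_pos: "bs > 0"
    and interval: "c < 0" "bs < d"
    and d1: "\<And>x. x \<in> {c<..<d} \<Longrightarrow> (f has_real_derivative f1 x) (at x)"
    and d2: "\<And>x. x \<in> {c<..<d} \<Longrightarrow> (f1 has_real_derivative f2 x) (at x)"
    and d3: "\<And>x. x \<in> {c<..<d} \<Longrightarrow> (f2 has_real_derivative f3 x) (at x)"
    and int3: "set_integrable lborel {0..bs} f3"
    and ab: "a \<in> {0..bs}" "b \<in> {0..bs}" "a < b"
    and alpha: "0 \<le> \<alpha>" "\<alpha> \<le> 1"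
    and mrange: "0 < m" "m \<le> 1"
    and q: "q \<ge> 1"
    and conv: "alpha_m_convex_on \<alpha> m bs (\<lambda>x. \<bar>f3 x\<bar> powr q)"
  shows "let C = 12 * (\<alpha>^2 + 11 * \<alpha> + 34 - 2 powr (4 + \<alpha>) * (2 - \<alpha>)) /
                 (2 powr \<alpha> * (1 + \<alpha>) * (2 + \<alpha>) * (3 + \<alpha>) * (4 + \<alpha>));
             K = 2 powr \<alpha> * (3 + \<alpha>) * (4 + \<alpha>)
         in \<bar>(LBINT x=a..m*b. f x) - (m*b - a) / 6 * (f a + 4 * f ((a + m*b) / 2) + f (m*b))\<bar>
            \<le> (m*b - a)^4 / 1152 *
               (((12 * \<bar>f3 a\<bar> powr q + m * (K - 12) * \<bar>f3 b\<bar> powr q) / K) powr (1/q)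
                + (C * \<bar>f3 a\<bar> powr q + m * (1 - C) * \<bar>f3 b\<bar> powr q) powr (1/q))"
proof -
  define C where "C = 12 * (\<alpha>^2 + 11 * \<alpha> + 34 - 2 powr (4 + \<alpha>) * (2 - \<alpha>)) /
                 (2 powr \<alpha> * (1 + \<alpha>) * (2 + \<alpha>) * (3 + \<alpha>) * (4 + \<alpha>))"
  define K where "K = 2 powr \<alpha> * (3 + \<alpha>) * (4 + \<alpha>)"
  define A where "A = \<bar>f3 a\<bar> powr q"
  define B where "B = \<bar>f3 b\<bar> powr q"
  define h where "h = m*b - a"
  define E where "E = (LBINT x=a..m*b. f x) - (m*b - a) / 6 * (f a + 4 * f ((a + m*b) / 2) + f (m*b))"
  have Kpos: "K > 0" unfolding K_def using alpha by simp
  have R2eq: "(12 * A + m * (K - 12) * B) / K = 12/K * A + m*(1 - 12/K)*B"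
    using Kpos by (simp add: field_simps)
  have main: "\<bar>E\<bar> \<le> h^4 / 1152 * ((12/K * A + m*(1 - 12/K)*B) powr (1/q) + (C * A + m * (1 - C) * B) powr (1/q))"
    proof (cases "h = 0")
    case True
    hence "m*b = a" by (simp add: h_def)
    thus ?thesis unfolding E_def using True by simp
  next
    case hnz: False
    define \<phi> where "\<phi> s = a + s*h" for s
    have mb: "m*b \<in> {0..bs}" using ab mrange
      by (auto simp: mult_le_cancel_right1 intro: order_trans[of _ b] mult_left_le_one_le)
    have phiI: "\<phi> s \<in> {0..bs}" if "s \<in> {0..1}" for s
    proof -
      have "\<phi> s = (1-s)*a + s*(m*b)" by (simp add: \<phi>_def h_def algebra_simps)
      moreover have "(1-s)*a + s*(m*b) \<ge> 0" using that ab mb by auto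
      moreover have "(1-s)*a + s*(m*b) \<le> (1-s)*bs + s*bs"
        using that ab mb by (intro add_mono mult_left_mono) auto
      moreover have "(1-s)*bs + s*bs = bs" by (simp add: algebra_simps)
      ultimately show ?thesis by auto
    qed
    have phiO: "\<phi> s \<in> {0<..<bs}" if "s \<in> {0<..<1}" for s
    proof -
      have e: "\<phi> s = (1-s)*a + s*(m*b)" by (simp add: \<phi>_def h_def algebra_simps)
      have ne: "a \<noteq> m*b" using hnz by (simp add: h_def)
      show ?thesis
      proof (cases "a < m*b")
        case True
        have "(1-s)*a + s*(m*b) > (1-s)*a + s*a" using that True by (intro add_strict_left_mono mult_strict_left_mono) auto
        moreover have "(1-s)*a + s*(m*b) < (1-s)*(m*b) + s*(m*b)" using that True by (intro add_strict_right_mono mult_strict_left_mono) auto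
        ultimately show ?thesis using e ab mb by (auto simp: algebra_simps)
      next
        case False
        hence F: "m*b < a" using ne by simp
        have "(1-s)*a + s*(m*b) > (1-s)*(m*b) + s*(m*b)" using that F by (intro add_strict_right_mono mult_strict_left_mono) auto
        moreover have "(1-s)*a + s*(m*b) < (1-s)*a + s*a" using that F by (intro add_strict_left_mono mult_strict_left_mono) auto
        ultimately show ?thesis using e ab mb by (auto simp: algebra_simps)
      qed
    qed
    have sub: "{0..bs} \<subseteq> {c<..<d}" using interval by auto
    have phiCD: "\<phi> s \<in> {c<..<d}" if "s \<in> {0..1}" for s using phiI[OF that] sub by auto
    have fcont: "continuous_on {0..bs} f"
    proof (intro continuous_at_imp_continuous_on ballI)
      fix x assume "x \<in> {0..bs}" thus "isCont f x" using d1 sub by (meson DERIV_isCont subsetD)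
    qed
    define F where "F x = integral {0..x} f" for x
    have Fd: "(F has_vector_derivative f x) (at x within {0..bs})" if "x \<in> {0..bs}" for x
      unfolding F_def by (rule integral_has_vector_derivative[OF fcont that])
    have Fcont: "continuous_on {0..bs} F"
      unfolding continuous_on_eq_continuous_within using Fd has_vector_derivative_continuous by blast
    have FdO: "(F has_real_derivative f x) (at x)" if "x \<in> {0<..<bs}" for x
    proof -
      have "x \<in> interior {0..bs}" using that by simp
      thus ?thesis using Fd[of x] that at_within_interior[of x "{0..bs}"]
        by (simp add: has_real_derivative_iff_has_vector_derivative)
    qed
    have LB: "(LBINT x=a..m*b. f x) = F (m*b) - F a"
    proof (rule interval_integral_FTC_finite)
      have s: "{min a (m*b)..max a (m*b)} \<subseteq> {0..bs}" using ab mb by auto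
      show "continuous_on {min a (m*b)..max a (m*b)} f" using continuous_on_subset[OF fcont s] .
      fix x assume "min a (m*b) \<le> x" "x \<le> max a (m*b)"
      hence x: "x \<in> {0..bs}" using s by auto
      show "(F has_vector_derivative f x) (at x within {min a (m*b)..max a (m*b)})"
        using has_vector_derivative_within_subset[OF Fd[OF x] s] .
    qed
    have dphi: "(\<phi> has_real_derivative h) (at s)" for s
      unfolding \<phi>_def by (auto intro!: derivative_eq_intros)
    have dG0: "((\<lambda>s. f (\<phi> s)) has_real_derivative f1 (\<phi> s) * h) (at s)" if "s \<in> {0..1}" for s
      by (rule DERIV_chain2[OF d1[OF phiCD[OF that]] dphi])
    have dG1: "((\<lambda>s. f1 (\<phi> s)) has_real_derivative f2 (\<phi> s) * h) (at s)" if "s \<in> {0..1}" for s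
      by (rule DERIV_chain2[OF d2[OF phiCD[OF that]] dphi])
    have dG2: "((\<lambda>s. f2 (\<phi> s)) has_real_derivative f3 (\<phi> s) * h) (at s)" if "s \<in> {0..1}" for s
      by (rule DERIV_chain2[OF d3[OF phiCD[OF that]] dphi])
    have dGF: "((\<lambda>s. F (\<phi> s)) has_real_derivative f (\<phi> s) * h) (at s)" if "s \<in> {0<..<1}" for s
      by (rule DERIV_chain2[OF FdO[OF phiO[OF that]] dphi])
    have cG0: "continuous_on {0..1} (\<lambda>s. f (\<phi> s))"
      using dG0 by (meson DERIV_isCont continuous_at_imp_continuous_on)
    have cG1: "continuous_on {0..1} (\<lambda>s. f1 (\<phi> s))"
      using dG1 by (meson DERIV_isCont continuous_at_imp_continuous_on)
    have cG2: "continuous_on {0..1} (\<lambda>s. f2 (\<phi> s))"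
      using dG2 by (meson DERIV_isCont continuous_at_imp_continuous_on)
    have cGF: "continuous_on {0..1} (\<lambda>s. F (\<phi> s))"
      by (rule continuous_on_compose2[OF Fcont]) (use phiI in \<open>auto simp: \<phi>_def intro!: continuous_intros\<close>)

    define G0 where "G0 s = f (\<phi> s)" for s
    define G1 where "G1 s = f1 (\<phi> s)" for s
    define G2 where "G2 s = f2 (\<phi> s)" for s
    define GF where "GF s = F (\<phi> s)" for s
    define H1 where "H1 s = h*((s^2 - 2* s^3)/12 * h^2 * G2 s - (2* s - 6* s^2)/12 * h * G1 s
        + (2 - 12* s)/12 * G0 s) + GF s" for s
    define H2 where "H2 s = -(h*((1 - 4* s + 5* s^2 - 2* s^3)/12 * h^2 * G2 s - (-4 + 10* s - 6* s^2)/12 * h * G1 s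
        + (10 - 12* s)/12 * G0 s) + GF s)" for s
    have hI1: "((\<lambda>s. h^4 * ((s^2 - 2* s^3)/12 * f3 (\<phi> s))) has_integral (H1 (1/2) - H1 0)) {0..1/2}"
    proof (rule fundamental_theorem_of_calculus_interior)
      show "continuous_on {0..1/2} H1" unfolding H1_def G0_def G1_def G2_def GF_def
        by (intro continuous_intros continuous_on_subset[OF cG0] continuous_on_subset[OF cG1]
             continuous_on_subset[OF cG2] continuous_on_subset[OF cGF]) auto
      fix s :: real assume s: "s \<in> {0<..<1/2}"
      hence s1: "s \<in> {0..1}" "s \<in> {0<..<1}" by auto
      have dG0': "(G0 has_real_derivative f1 (\<phi> s) * h) (at s)"
        using dG0[OF s1(1)] by (simp add: G0_def[abs_def])
      have dG1': "(G1 has_real_derivative f2 (\<phi> s) * h) (at s)"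
        using dG1[OF s1(1)] by (simp add: G1_def[abs_def])
      have dG2': "(G2 has_real_derivative f3 (\<phi> s) * h) (at s)"
        using dG2[OF s1(1)] by (simp add: G2_def[abs_def])
      have dGF': "(GF has_real_derivative f (\<phi> s) * h) (at s)"
        using dGF[OF s1(2)] by (simp add: GF_def[abs_def])
      have dp1: "((\<lambda>s. (s^2 - 2 * s^3)/12) has_real_derivative (2 * s - 6 * s^2)/12) (at s)"
        by (auto intro!: derivative_eq_intros simp: power2_eq_square power3_eq_cube field_simps)
      have dp2: "((\<lambda>s. (2 * s - 6 * s^2)/12) has_real_derivative (2 - 12 * s)/12) (at s)"
        by (auto intro!: derivative_eq_intros simp: power2_eq_square power3_eq_cube field_simps)
      have dp3: "((\<lambda>s. (2 - 12 * s)/12) has_real_derivative -1) (at s)"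
        by (auto intro!: derivative_eq_intros simp: power2_eq_square power3_eq_cube field_simps)
      have D: "(H1 has_real_derivative h^4 * ((s^2 - 2 * s^3)/12 * f3 (\<phi> s))) (at s)"
        unfolding H1_def
        by (rule DERIV_cong[OF DERIV_add[OF DERIV_cmult[OF DERIV_add[OF DERIV_diff[OF dprod[OF dp1 dG2'] dprod[OF dp2 dG1']] dprod0[OF dp3 dG0']]] dGF']])
           (simp add: G0_def G1_def G2_def algebra_simps power2_eq_square power3_eq_cube power4_eq_xxxx)
      show "(H1 has_vector_derivative h^4 * ((s^2 - 2 * s^3)/12 * f3 (\<phi> s))) (at s)"
        using D unfolding has_real_derivative_iff_has_vector_derivative .
    qed simp
    have hI2: "((\<lambda>s. h^4 * ((2 * s^3 - 5 * s^2 + 4 * s - 1)/12 * f3 (\<phi> s))) has_integral (H2 1 - H2 (1/2))) {1/2..1}"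
    proof (rule fundamental_theorem_of_calculus_interior)
      show "continuous_on {1/2..1} H2" unfolding H2_def G0_def G1_def G2_def GF_def
        by (intro continuous_intros continuous_on_subset[OF cG0] continuous_on_subset[OF cG1]
             continuous_on_subset[OF cG2] continuous_on_subset[OF cGF]) auto
      fix s :: real assume s: "s \<in> {1/2<..<1}"
      hence s1: "s \<in> {0..1}" "s \<in> {0<..<1}" by auto
      have dG0': "(G0 has_real_derivative f1 (\<phi> s) * h) (at s)"
        using dG0[OF s1(1)] by (simp add: G0_def[abs_def])
      have dG1': "(G1 has_real_derivative f2 (\<phi> s) * h) (at s)"
        using dG1[OF s1(1)] by (simp add: G1_def[abs_def])
      have dG2': "(G2 has_real_derivative f3 (\<phi> s) * h) (at s)"
        using dG2[OF s1(1)] by (simp add: G2_def[abs_def])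
      have dGF': "(GF has_real_derivative f (\<phi> s) * h) (at s)"
        using dGF[OF s1(2)] by (simp add: GF_def[abs_def])
      have dp1: "((\<lambda>s. (1 - 4 * s + 5 * s^2 - 2 * s^3)/12) has_real_derivative (-4 + 10 * s - 6 * s^2)/12) (at s)"
        by (auto intro!: derivative_eq_intros simp: power2_eq_square power3_eq_cube field_simps)
      have dp2: "((\<lambda>s. (-4 + 10 * s - 6 * s^2)/12) has_real_derivative (10 - 12 * s)/12) (at s)"
        by (auto intro!: derivative_eq_intros simp: power2_eq_square power3_eq_cube field_simps)
      have dp3: "((\<lambda>s. (10 - 12 * s)/12) has_real_derivative -1) (at s)"
        by (auto intro!: derivative_eq_intros simp: power2_eq_square power3_eq_cube field_simps)
      have D: "(H2 has_real_derivative h^4 * ((2 * s^3 - 5 * s^2 + 4 * s - 1)/12 * f3 (\<phi> s))) (at s)"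
        unfolding H2_def
        by (rule DERIV_cong[OF DERIV_minus[OF DERIV_add[OF DERIV_cmult[OF DERIV_add[OF DERIV_diff[OF dprod[OF dp1 dG2'] dprod[OF dp2 dG1']] dprod0[OF dp3 dG0']]] dGF']]])
           (simp add: G0_def G1_def G2_def algebra_simps power2_eq_square power3_eq_cube power4_eq_xxxx; simp add: field_simps)
      show "(H2 has_vector_derivative h^4 * ((2 * s^3 - 5 * s^2 + 4 * s - 1)/12 * f3 (\<phi> s))) (at s)"
        using D unfolding has_real_derivative_iff_has_vector_derivative .
    qed simp
    have h4: "h^4 \<noteq> 0" using hnz by simp
    define V1 where "V1 = H1 (1/2) - H1 0"
    define V2 where "V2 = H2 1 - H2 (1/2)"
    have gI1: "((\<lambda>s. (s^2 - 2 * s^3)/12 * f3 (\<phi> s)) has_integral (V1 / h^4)) {0..1/2}"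
      using hI1 has_integral_mult_right_iff[OF h4] unfolding V1_def by blast
    have gI2: "((\<lambda>s. (2 * s^3 - 5 * s^2 + 4 * s - 1)/12 * f3 (\<phi> s)) has_integral (V2 / h^4)) {1/2..1}"
      using hI2 has_integral_mult_right_iff[OF h4] unfolding V2_def by blast
    have Apos: "A \<ge> 0" "B \<ge> 0" by (auto simp: A_def B_def)
    have Tb: "0 \<le> (1-s) powr \<alpha>" "(1-s) powr \<alpha> \<le> 1" if "s \<in> {0..1}" for s
      using that alpha by (auto intro!: powr_le1)
    have Gpos: "0 \<le> (1-s) powr \<alpha> * A + m*(1 - (1-s) powr \<alpha>)*B" if "s \<in> {0..1}" for s
      using Tb[OF that] Apos mrange by (intro add_nonneg_nonneg mult_nonneg_nonneg) auto
    have Fb: "\<bar>f3 (\<phi> s)\<bar> powr q \<le> (1-s) powr \<alpha> * A + m*(1 - (1-s) powr \<alpha>)*B"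
      if "s \<in> {0..1}" "s < 1" for s
    proof -
      have t: "1 - s \<in> {0..1}" using that by auto
      have "\<bar>f3 ((1-s) * a + m * (1 - (1-s)) * b)\<bar> powr q
          \<le> (if 1-s = 0 \<and> \<alpha> = 0 then 1 else (1-s) powr \<alpha>) * \<bar>f3 a\<bar> powr q
             + m * (1 - (if 1-s = 0 \<and> \<alpha> = 0 then 1 else (1-s) powr \<alpha>)) * \<bar>f3 b\<bar> powr q"
        using conv ab t unfolding alpha_m_convex_on_def by blast
      moreover have "(1-s) * a + m * (1 - (1-s)) * b = \<phi> s" by (simp add: \<phi>_def h_def algebra_simps)
      ultimately show ?thesis using that by (simp add: A_def B_def)
    qed
    have B1: "\<bar>V1 / h^4\<bar> \<le> 1/1152 * (C*A + m*(1-C)*B) powr (1/q)"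
    proof (rule half_bound[OF gI1 int_K1 _ _ q])
      show "((\<lambda>s. (s^2 - 2 * s^3)/12 * (1-s) powr \<alpha>) has_integral (1/1152 * C)) {0..1/2}"
        unfolding C_def by (rule int_K1a[OF alpha(1)])
      show "(1/1152::real) > 0" by simp
      show "\<forall>s\<in>{0..1/2}. (s^2 - 2 * s^3)/12 \<ge> (0::real)"
      proof
        fix s :: real assume "s \<in> {0..1/2}"
        hence "s^2 * (1 - 2* s) \<ge> 0" by auto
        thus "(s^2 - 2 * s^3)/12 \<ge> 0" by (simp add: algebra_simps power2_eq_square power3_eq_cube)
      qed
      show "\<forall>s\<in>{0..1/2}. 0 \<le> (1-s) powr \<alpha> * A + m*(1 - (1-s) powr \<alpha>)*B" using Gpos by auto
      show "\<forall>s\<in>{0..1/2}. (s^2 - 2 * s^3)/12 = 0 \<or> \<bar>f3 (\<phi> s)\<bar> powr q \<le> (1-s) powr \<alpha> * A + m*(1 - (1-s) powr \<alpha>)*B"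
        using Fb by auto
    qed
    have B2: "\<bar>V2 / h^4\<bar> \<le> 1/1152 * (12/K*A + m*(1-12/K)*B) powr (1/q)"
    proof (rule half_bound[OF gI2 int_K2 _ _ q])
      show "((\<lambda>s. (2 * s^3 - 5 * s^2 + 4 * s - 1)/12 * (1-s) powr \<alpha>) has_integral (1/1152 * (12/K))) {1/2..1}"
        unfolding K_def by (rule int_K2a[OF alpha(1)])
      show "(1/1152::real) > 0" by simp
      show "\<forall>s\<in>{1/2..1}. (2 * s^3 - 5 * s^2 + 4 * s - 1)/12 \<ge> (0::real)"
      proof
        fix s :: real assume "s \<in> {1/2..1}"
        hence "(1-s)^2 * (2* s - 1) \<ge> 0" by auto
        thus "(2 * s^3 - 5 * s^2 + 4 * s - 1)/12 \<ge> 0" by (simp add: algebra_simps power2_eq_square power3_eq_cube)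
      qed
      show "\<forall>s\<in>{1/2..1}. 0 \<le> (1-s) powr \<alpha> * A + m*(1 - (1-s) powr \<alpha>)*B" using Gpos by auto
      show "\<forall>s\<in>{1/2..1}. (2 * s^3 - 5 * s^2 + 4 * s - 1)/12 = 0 \<or> \<bar>f3 (\<phi> s)\<bar> powr q \<le> (1-s) powr \<alpha> * A + m*(1 - (1-s) powr \<alpha>)*B"
      proof
        fix s :: real assume s: "s \<in> {1/2..1}"
        show "(2 * s^3 - 5 * s^2 + 4 * s - 1)/12 = 0 \<or> \<bar>f3 (\<phi> s)\<bar> powr q \<le> (1-s) powr \<alpha> * A + m*(1 - (1-s) powr \<alpha>)*B"
        proof (cases "s = 1")
          case True thus ?thesis by simp
        next
          case False thus ?thesis using Fb[of s] s by auto
        qed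
      qed
    qed
    have phi0: "\<phi> 0 = a" and phi1: "\<phi> 1 = m*b" and phi2: "\<phi> (1/2) = (a + m*b)/2"
      by (auto simp: \<phi>_def h_def field_simps)
    have Eeq: "E = V1 - V2"
      unfolding E_def LB V1_def V2_def H1_def H2_def G0_def G1_def G2_def GF_def phi0 phi1 phi2
      by (simp add: h_def field_simps power2_eq_square power3_eq_cube)
    have "\<bar>E\<bar> \<le> \<bar>V1\<bar> + \<bar>V2\<bar>" unfolding Eeq by simp
    also have "\<dots> = h^4 * (\<bar>V2 / h^4\<bar> + \<bar>V1 / h^4\<bar>)"
      using h4 by (simp add: abs_divide field_simps)
    also have "\<dots> \<le> h^4 * (1/1152 * (12/K*A + m*(1-12/K)*B) powr (1/q) + 1/1152 * (C*A + m*(1-C)*B) powr (1/q))"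
      using B1 B2 by (intro mult_left_mono add_mono) auto
    finally show ?thesis by (simp add: field_simps)
  qed
  show ?thesis using main unfolding Let_def C_def[symmetric] K_def[symmetric] A_def[symmetric] B_def[symmetric]
      E_def[symmetric] unfolding h_def[symmetric] R2eq .
qed

end
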